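(* Let $Q$ be a right Leibniz algebra which is a weak algebra of quotients of its subalgebra $L$, and let $I$ be an ideal of $L$. If $\mathrm{Ann}_L(I)=\{0\}$ then $\mathrm{Ann}_Q(I)=\{0\}$, and if $\mathrm{ran}_L(I)=\{0\}$ then $\mathrm{ran}_Q(I)=\{0\}$.
   Context: A right Leibniz algebra satisfies $[x,[y,z]]=[[x,y],z]-[[x,z],y]$. Ideals of $L$: subspaces $I$ with $[I,L]\subseteq I$, $[L,I]\subseteq I$. For $X\in\{L,Q\}$: $\mathrm{ran}_X(I)=\{u\in X:[y,u]=0\ \forall y\in I\}$, $\mathrm{Ann}_X(I)=\{u\in X:[u,y]=[y,u]=0\ \forall y\in I\}$. $Q$ is a weak algebra of quotients of $L$ if for every $0\ne q\in Q$ there is $x\in L$ with $0\ne[q,x]\in L$ or $y\in L$ with $0\ne[y,q]\in L$. *)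

theory Defs
  imports Main "HOL.Vector_Spaces"
begin

definition right_leibniz_algebra ::
  "('k::field \<Rightarrow> 'v::ab_group_add \<Rightarrow> 'v) \<Rightarrow> ('v \<Rightarrow> 'v \<Rightarrow> 'v) \<Rightarrow> bool" where
  "right_leibniz_algebra scale br \<longleftrightarrow>
     vector_space scale \<and>
     (\<forall>x y z. br (x + y) z = br x z + br y z) \<and>
     (\<forall>x y z. br x (y + z) = br x y + br x z) \<and>
     (\<forall>a x y. br (scale a x) y = scale a (br x y)) \<and>
     (\<forall>a x y. br x (scale a y) = scale a (br x y)) \<and>
     (\<forall>x y z. br x (br y z) = br (br x y) z - br (br x z) y)"

definition subalgebra ::
  "('k::field \<Rightarrow> 'v::ab_group_add \<Rightarrow> 'v) \<Rightarrow> ('v \<Rightarrow> 'v \<Rightarrow> 'v) \<Rightarrow> 'v set \<Rightarrow> bool" where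
  "subalgebra scale br L \<longleftrightarrow>
     module.subspace scale L \<and> (\<forall>x\<in>L. \<forall>y\<in>L. br x y \<in> L)"

definition ideal_of ::
  "('k::field \<Rightarrow> 'v::ab_group_add \<Rightarrow> 'v) \<Rightarrow> ('v \<Rightarrow> 'v \<Rightarrow> 'v) \<Rightarrow> 'v set \<Rightarrow> 'v set \<Rightarrow> bool" where
  "ideal_of scale br L I \<longleftrightarrow>
     module.subspace scale I \<and> I \<subseteq> L \<and>
     (\<forall>x\<in>I. \<forall>y\<in>L. br x y \<in> I) \<and> (\<forall>x\<in>I. \<forall>y\<in>L. br y x \<in> I)"

definition r_ann :: "('v::zero \<Rightarrow> 'v \<Rightarrow> 'v) \<Rightarrow> 'v set \<Rightarrow> 'v set \<Rightarrow> 'v set" where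
  "r_ann br X I = {u \<in> X. \<forall>y\<in>I. br y u = 0}"

definition Ann :: "('v::zero \<Rightarrow> 'v \<Rightarrow> 'v) \<Rightarrow> 'v set \<Rightarrow> 'v set \<Rightarrow> 'v set" where
  "Ann br X I = {u \<in> X. \<forall>y\<in>I. br u y = 0 \<and> br y u = 0}"

text \<open>The ambient algebra Q (the whole type) is a weak algebra of quotients of L.\<close>
definition weak_algebra_of_quotients :: "('v::zero \<Rightarrow> 'v \<Rightarrow> 'v) \<Rightarrow> 'v set \<Rightarrow> bool" where
  "weak_algebra_of_quotients br L \<longleftrightarrow>
     (\<forall>q. q \<noteq> 0 \<longrightarrow>
        (\<exists>x\<in>L. br q x \<noteq> 0 \<and> br q x \<in> L) \<or> (\<exists>y\<in>L. br y q \<noteq> 0 \<and> br y q \<in> L))"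

end

theory Submission
  imports Defs
begin

theorem proposition3p11:
  fixes scale :: "'k::field \<Rightarrow> 'v::ab_group_add \<Rightarrow> 'v"
    and br :: "'v \<Rightarrow> 'v \<Rightarrow> 'v"
    and L I :: "'v set"
  assumes "right_leibniz_algebra scale br"
    and "subalgebra scale br L"
    and "weak_algebra_of_quotients br L"
    and "ideal_of scale br L I"
  shows "(Ann br L I = {0} \<longrightarrow> Ann br UNIV I = {0})
       \<and> (r_ann br L I = {0} \<longrightarrow> r_ann br UNIV I = {0})"
proof -
  have addl: "\<And>x y z. br (x + y) z = br x z + br y z"
   and addr: "\<And>x y z. br x (y + z) = br x y + br x z"
   and lei: "\<And>x y z. br x (br y z) = br (br x y) z - br (br x z) y"
    using assms(1) unfolding right_leibniz_algebra_def by blast+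
  have l0: "\<And>z. br 0 z = 0" using addl[of 0 0] by simp
  have r0: "\<And>z. br z 0 = 0" using addr[of _ 0 0] by simp
  have lei2: "\<And>a b c. br (br a b) c = br a (br b c) + br (br a c) b"
    using lei by (simp add: algebra_simps)
  have I1: "\<And>x y. x \<in> I \<Longrightarrow> y \<in> L \<Longrightarrow> br x y \<in> I"
   and I2: "\<And>x y. x \<in> I \<Longrightarrow> y \<in> L \<Longrightarrow> br y x \<in> I"
    using assms(4) unfolding ideal_of_def by blast+
  have wq: "\<And>q. q \<noteq> 0 \<Longrightarrow> (\<exists>x\<in>L. br q x \<noteq> 0 \<and> br q x \<in> L) \<or> (\<exists>y\<in>L. br y q \<noteq> 0 \<and> br y q \<in> L)"
    using assms(3) unfolding weak_algebra_of_quotients_def by blast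
  have A: "Ann br UNIV I = {0}" if h: "Ann br L I = {0}"
  proof -
    have "q = 0" if q: "q \<in> Ann br UNIV I" for q
    proof (rule ccontr)
      assume "q \<noteq> 0"
      have qa: "\<And>y. y \<in> I \<Longrightarrow> br q y = 0 \<and> br y q = 0" using q unfolding Ann_def by auto
      from wq[OF \<open>q \<noteq> 0\<close>] show False
      proof
        assume "\<exists>x\<in>L. br q x \<noteq> 0 \<and> br q x \<in> L"
        then obtain x where x: "x \<in> L" "br q x \<noteq> 0" "br q x \<in> L" by blast
        have "br q x \<in> Ann br L I"
          unfolding Ann_def
        proof (safe intro!: x(3))
          fix y assume y: "y \<in> I"
          show "br (br q x) y = 0" using lei2[of q x y] qa[OF y] qa[OF I2[OF y x(1)]] l0 r0 by simp
          show "br y (br q x) = 0" using lei[of y q x] qa[OF y] qa[OF I1[OF y x(1)]] l0 r0 by simp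
        qed
        then show False using h x(2) by auto
      next
        assume "\<exists>y\<in>L. br y q \<noteq> 0 \<and> br y q \<in> L"
        then obtain x where x: "x \<in> L" "br x q \<noteq> 0" "br x q \<in> L" by blast
        have "br x q \<in> Ann br L I"
          unfolding Ann_def
        proof (safe intro!: x(3))
          fix y assume y: "y \<in> I"
          show "br (br x q) y = 0" using lei2[of x q y] qa[OF y] qa[OF I2[OF y x(1)]] l0 r0 by simp
          show "br y (br x q) = 0" using lei[of y x q] qa[OF y] qa[OF I1[OF y x(1)]] l0 r0 by simp
        qed
        then show False using h x(2) by auto
      qed
    qed
    moreover have "0 \<in> Ann br UNIV I" unfolding Ann_def using l0 r0 by auto
    ultimately show ?thesis by blast
  qed
  have B: "r_ann br UNIV I = {0}" if h: "r_ann br L I = {0}"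
  proof -
    have "q = 0" if q: "q \<in> r_ann br UNIV I" for q
    proof (rule ccontr)
      assume "q \<noteq> 0"
      have qa: "\<And>y. y \<in> I \<Longrightarrow> br y q = 0" using q unfolding r_ann_def by auto
      from wq[OF \<open>q \<noteq> 0\<close>] show False
      proof
        assume "\<exists>x\<in>L. br q x \<noteq> 0 \<and> br q x \<in> L"
        then obtain x where x: "x \<in> L" "br q x \<noteq> 0" "br q x \<in> L" by blast
        have "br q x \<in> r_ann br L I"
          unfolding r_ann_def
        proof (safe intro!: x(3))
          fix y assume y: "y \<in> I"
          show "br y (br q x) = 0" using lei[of y q x] qa[OF y] qa[OF I1[OF y x(1)]] l0 r0 by simp
        qed
        then show False using h x(2) by auto
      next
        assume "\<exists>y\<in>L. br y q \<noteq> 0 \<and> br y q \<in> L"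
        then obtain x where x: "x \<in> L" "br x q \<noteq> 0" "br x q \<in> L" by blast
        have "br x q \<in> r_ann br L I"
          unfolding r_ann_def
        proof (safe intro!: x(3))
          fix y assume y: "y \<in> I"
          show "br y (br x q) = 0" using lei[of y x q] qa[OF y] qa[OF I1[OF y x(1)]] l0 r0 by simp
        qed
        then show False using h x(2) by auto
      qed
    qed
    moreover have "0 \<in> r_ann br UNIV I" unfolding r_ann_def using r0 by auto
    ultimately show ?thesis by blast
  qed
  show ?thesis using A B by blast
qed

end
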